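(* Fix $b\in\mathbb{N}$ with $b\ge2$. Then, as $x\to\infty$, \[ \sum_{\substack{0<r\le x\\ 0<s\le x^b}}\gcd_b(r,s)=x^{b+1}\frac{\zeta(b)}{\zeta(b+1)}+O(E(x)), \] where the sum is over integers $r,s$, $\zeta$ is the Riemann zeta function, and $E(x)=x^2\log x$ if $b=2$, $E(x)=x^b$ if $b>2$.
   Context: For $b\in\mathbb{N}$ and $r,s\in\mathbb{N}$, $\gcd_b(r,s)=\max\{k\in\mathbb{N} : k\mid r \text{ and } k^b\mid s\}$. *)

theory Defs
  imports "HOL-Analysis.Analysis" "HOL-Library.Landau_Symbols"
begin

definition gcd_b :: "nat \<Rightarrow> nat \<Rightarrow> nat \<Rightarrow> nat" where
  "gcd_b b r s = Max {k. k dvd r \<and> k ^ b dvd s}"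

definition zeta :: "real \<Rightarrow> real" where
  "zeta s = (\<Sum>n. 1 / (real (Suc n)) powr s)"

definition gcdb_sum :: "nat \<Rightarrow> real \<Rightarrow> real" where
  "gcdb_sum b x = (\<Sum>r\<in>{1..nat \<lfloor>x\<rfloor>}. \<Sum>s\<in>{1..nat \<lfloor>x ^ b\<rfloor>}. real (gcd_b b r s))"

definition err_E :: "nat \<Rightarrow> real \<Rightarrow> real" where
  "err_E b x = (if b = 2 then x\<^sup>2 * ln x else x ^ b)"

end

theory Submission
  imports Defs "HOL-Number_Theory.Number_Theory"
begin



lemma lcm_pow_nat: "lcm (a::nat) c ^ n = lcm (a ^ n) (c ^ n)"
proof (cases "a = 0 \<or> c = 0")
  case True then show ?thesis by (cases n) auto
next
  case False
  then have g: "gcd a c > 0" by simp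
  have e1: "lcm a c * gcd a c = a * c" by (metis prod_gcd_lcm_nat mult.commute)
  have e2: "lcm (a^n) (c^n) * gcd a c ^ n = a^n * c^n" by (metis prod_gcd_lcm_nat mult.commute gcd_exp)
  have "lcm a c ^ n * gcd a c ^ n = lcm (a^n) (c^n) * gcd a c ^ n"
    unfolding e2 power_mult_distrib[symmetric] e1 ..
  then show ?thesis using g False by auto
qed

lemma gcdb_set_finite: assumes "(r::nat) > 0" shows "finite {k. k dvd r \<and> k ^ b dvd s}"
proof (rule finite_subset[of _ "{..r}"])
  show "{k. k dvd r \<and> k ^ b dvd s} \<subseteq> {..r}"
  proof
    fix k assume "k \<in> {k. k dvd r \<and> k ^ b dvd s}"
    then show "k \<in> {..r}" using dvd_imp_le[of k r] assms by auto
  qed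
qed simp

lemma gcdb_mem: assumes "r > 0" shows "gcd_b b r s dvd r \<and> gcd_b b r s ^ b dvd s"
proof -
  have "1 \<in> {k. k dvd r \<and> k ^ b dvd s}" by simp
  then have "gcd_b b r s \<in> {k. k dvd r \<and> k ^ b dvd s}"
    unfolding gcd_b_def using Max_in[OF gcdb_set_finite[OF assms]] by blast
  then show ?thesis by simp
qed

lemma gcdb_dvd_iff: assumes "r > 0"
  shows "d dvd gcd_b b r s \<longleftrightarrow> d dvd r \<and> d ^ b dvd s"
proof
  let ?g = "gcd_b b r s"
  assume "d dvd ?g"
  then show "d dvd r \<and> d ^ b dvd s" using gcdb_mem[OF assms, of b s]
    by (meson dvd_trans dvd_power_same)
next
  let ?g = "gcd_b b r s"
  assume d: "d dvd r \<and> d ^ b dvd s"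
  have gm: "?g dvd r" "?g ^ b dvd s" using gcdb_mem[OF assms] by auto
  have "lcm d ?g dvd r" using d gm by simp
  moreover have "lcm d ?g ^ b dvd s" using d gm by (simp add: lcm_pow_nat)
  ultimately have "lcm d ?g \<le> ?g" unfolding gcd_b_def
    using Max_ge[OF gcdb_set_finite[OF assms]] by blast
  moreover have "d \<noteq> 0" using d assms by auto
  then have "lcm d ?g > 0" using gm(1) assms by (auto intro: Nat.gr0I)
  then have "?g \<le> lcm d ?g" by (intro dvd_imp_le) simp_all
  ultimately have "lcm d ?g = ?g" by linarith
  then show "d dvd ?g" by (metis dvd_lcm1)
qed

lemma gcdb_totient: assumes "r > 0"
  shows "real (gcd_b b r s) = (\<Sum>d\<in>{1..r}. if d dvd r \<and> d ^ b dvd s then real (totient d) else 0)"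
proof -
  have "gcd_b b r s = (\<Sum>d | d dvd gcd_b b r s. totient d)" by (simp add: totient_divisor_sum)
  also have "{d. d dvd gcd_b b r s} = {d\<in>{1..r}. d dvd r \<and> d ^ b dvd s}"
    using gcdb_dvd_iff[OF assms] assms by (auto dest: dvd_imp_le intro: Nat.gr0I)
  finally have "real (gcd_b b r s) = real (\<Sum>d\<in>{d\<in>{1..r}. d dvd r \<and> d ^ b dvd s}. totient d)" by simp
  also have "\<dots> = (\<Sum>d\<in>{1..r}. if d dvd r \<and> d ^ b dvd s then real (totient d) else 0)"
    by (simp add: sum.inter_filter[symmetric])
  finally show ?thesis .
qed

lemma card_multiples: assumes "d > 0" shows "card {r\<in>{1..N}. d dvd (r::nat)} = N div d"
proof -
  have "{r\<in>{1..N}. d dvd r} = (\<lambda>k. d * k) ` {1..N div d}"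
  proof safe
    fix r assume r: "r \<in> {1..N}" "d dvd r"
    then obtain k where k: "r = d * k" by blast
    then have "k \<ge> 1" using r by (cases k) auto
    moreover have "k \<le> N div d" using r k assms
      by (metis atLeastAtMost_iff div_le_mono nonzero_mult_div_cancel_left not_gr0)
    ultimately show "r \<in> (\<lambda>k. d * k) ` {1..N div d}" using k by auto
  next
    fix k assume "k \<in> {1..N div d}"
    then show "d * k \<in> {1..N}" using assms
      by (auto simp: less_eq_div_iff_mult_less_eq mult.commute)
  qed auto
  also have "card \<dots> = N div d" using assms by (subst card_image) (auto simp: inj_on_def)
  finally show ?thesis .
qed


lemma mult_div_aux: "1 \<le> (a::nat) \<Longrightarrow> a * c div a = c" by simp

lemma zeta_has_sum: assumes "k \<ge> 2"
  shows "((\<lambda>n::nat. 1 / real n ^ k) has_sum zeta (real k)) {1..}"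
proof -
  have s: "summable (\<lambda>n. inverse (real n ^ k))" using inverse_power_summable[OF assms] by simp
  have s': "summable (\<lambda>n. 1 / real (Suc n) ^ k)"
    using s by (subst (asm) summable_Suc_iff[symmetric]) (simp add: inverse_eq_divide)
  have z: "zeta (real k) = (\<Sum>n. 1 / real (Suc n) ^ k)"
    unfolding zeta_def by (simp add: powr_realpow)
  have "((\<lambda>n. 1 / real (Suc n) ^ k) has_sum zeta (real k)) UNIV"
    unfolding z by (rule sums_nonneg_imp_has_sum) (use s' in \<open>auto simp: summable_sums\<close>)
  also have "?this \<longleftrightarrow> ((\<lambda>n::nat. 1 / real n ^ k) has_sum zeta (real k)) {1..}"
    by (rule has_sum_reindex_bij_witness[where i = "\<lambda>n. n - 1" and j = Suc]) auto
  finally show ?thesis .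
qed

lemma identity_C: assumes b: "b \<ge> 2"
  shows "((\<lambda>d::nat. real (totient d) / real d ^ (b+1)) has_sum (zeta (real b) / zeta (real (b+1)))) {1..}"
proof -
  define a where "a = (\<lambda>d::nat. real (totient d) / real d ^ (b+1))"
  define z where "z = (\<lambda>n::nat. 1 / real n ^ (b+1))"
  define Z where "Z = zeta (real (b+1))"
  have hz: "(z has_sum Z) {1..}" unfolding z_def Z_def using zeta_has_sum[of "b+1"] b by simp
  have hzb: "((\<lambda>n::nat. 1 / real n ^ b) has_sum zeta (real b)) {1..}" using zeta_has_sum[OF b] .
  have a_nonneg: "\<And>d. a d \<ge> 0" unfolding a_def by simp
  have z_nonneg: "\<And>d. z d \<ge> 0" unfolding z_def by simp
  have a_le: "a d \<le> 1 / real d ^ b" if "d \<in> {1..}" for d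
  proof -
    have "real (totient d) \<le> real d" by (simp add: totient_le)
    then have "real (totient d) / real d ^ (b+1) \<le> real d / real d ^ (b+1)"
      by (intro divide_right_mono) auto
    also have "\<dots> = 1 / real d ^ b" using that by (simp add: field_simps)
    finally show ?thesis unfolding a_def .
  qed
  have sa: "a summable_on {1..}"
    by (rule summable_on_comparison_test[OF _ a_le a_nonneg]) (use hzb in \<open>auto simp: summable_on_def\<close>)
  define C where "C = infsum a {1..}"
  have ha: "(a has_sum C) {1..}" using sa unfolding C_def by simp
  have P: "((\<lambda>(d,m). a d * z m) has_sum C * Z) (Sigma {1..} (\<lambda>_. {1..}))"
  proof (rule has_sum_SigmaI)
    show "((\<lambda>m. (\<lambda>(d,m). a d * z m) (d, m)) has_sum a d * Z) {1..}" for d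
      using has_sum_cmult_right[OF hz, of "a d"] by simp
    show "((\<lambda>d. a d * Z) has_sum C * Z) {1..}" using has_sum_cmult_left[OF ha] .
    show "(\<lambda>(d,m). a d * z m) summable_on Sigma {1..} (\<lambda>_. {1..})"
    proof (rule summable_on_SigmaI)
      show "((\<lambda>m. (\<lambda>(d,m). a d * z m) (d, m)) has_sum a d * Z) {1..}" for d
        using has_sum_cmult_right[OF hz, of "a d"] by simp
      show "(\<lambda>d. a d * Z) summable_on {1..}" using has_sum_cmult_left[OF ha] by (auto simp: summable_on_def)
      show "\<And>x y. x \<in> {1..} \<Longrightarrow> y \<in> {1..} \<Longrightarrow> 0 \<le> (\<lambda>(d,m). a d * z m) (x, y)"
        using a_nonneg z_nonneg by simp
    qed
  qed
  have Q: "((\<lambda>(n,d). real (totient d) / real n ^ (b+1)) has_sum C * Z) (Sigma {1..} (\<lambda>n::nat. {d. d dvd n}))"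
  proof -
    have "((\<lambda>(d,m). a d * z m) has_sum C * Z) (Sigma {1..} (\<lambda>_. {1..})) \<longleftrightarrow>
          ((\<lambda>(n,d). real (totient d) / real n ^ (b+1)) has_sum C * Z) (Sigma {1..} (\<lambda>n::nat. {d. d dvd n}))"
    proof (rule has_sum_reindex_bij_witness[where j = "\<lambda>(d,m). (d*m, d)" and i = "\<lambda>(n,d). (d, n div d)"])
      show "\<And>p::nat\<times>nat. p \<in> Sigma {1..} (\<lambda>_. {1..}) \<Longrightarrow> (case case p of (d, m) \<Rightarrow> (d * m, d) of (n, d) \<Rightarrow> (d, n div d)) = p"
        by (auto simp: mult_div_aux)
      show "\<And>p::nat\<times>nat. p \<in> Sigma {1..} (\<lambda>_. {1..}) \<Longrightarrow> (case p of (d, m) \<Rightarrow> (d * m, d)) \<in> Sigma {1..} (\<lambda>n::nat. {d. d dvd n})"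
        by auto
      show "\<And>p::nat\<times>nat. p \<in> Sigma {1..} (\<lambda>n::nat. {d. d dvd n}) \<Longrightarrow> (case case p of (n, d) \<Rightarrow> (d, n div d) of (d, m) \<Rightarrow> (d * m, d)) = p"
        by auto
      show "\<And>p::nat\<times>nat. p \<in> Sigma {1..} (\<lambda>n::nat. {d. d dvd n}) \<Longrightarrow> (case p of (n, d) \<Rightarrow> (d, n div d)) \<in> Sigma {1..} (\<lambda>_. {1..})"
        by (auto intro: Nat.gr0I dest: dvd_div_eq_0_iff)
      show "\<And>p::nat\<times>nat. p \<in> Sigma {1..} (\<lambda>_. {1..}) \<Longrightarrow> (case case p of (d, m) \<Rightarrow> (d * m, d) of (n, d) \<Rightarrow> real (totient d) / real n ^ (b + 1)) = (case p of (d, m) \<Rightarrow> a d * z m)"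
        by (auto simp: a_def z_def power_mult_distrib)
    qed simp
    then show ?thesis using P by simp
  qed
  have R: "((\<lambda>n::nat. 1 / real n ^ b) has_sum C * Z) {1..}"
  proof (rule has_sum_SigmaD[OF Q])
    fix n :: nat assume n: "n \<in> {1..}"
    have fin: "finite {d. d dvd n}" using n by simp
    have "(\<Sum>d | d dvd n. real (totient d) / real n ^ (b+1)) = real (\<Sum>d | d dvd n. totient d) / real n ^ (b+1)"
      by (simp add: sum_divide_distrib)
    also have "\<dots> = 1 / real n ^ b" using n by (simp add: totient_divisor_sum field_simps)
    finally show "((\<lambda>d. (\<lambda>(n,d). real (totient d) / real n ^ (b+1)) (n, d)) has_sum 1 / real n ^ b) {d. d dvd n}"
      using fin by (intro has_sum_finiteI) simp_all
  qed
  have CZ: "C * Z = zeta (real b)" using has_sum_unique[OF R hzb] .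
  have "sum z {1} \<le> Z" by (rule finite_sum_le_has_sum[OF hz]) (use z_nonneg in auto)
  then have "Z > 0" unfolding z_def by simp
  then have "C = zeta (real b) / zeta (real (b+1))" using CZ unfolding Z_def by (simp add: field_simps)
  then show ?thesis using ha unfolding a_def by simp
qed


lemma sum_if_const: "finite A \<Longrightarrow> (\<Sum>x\<in>A. if P x then (c::real) else 0) = c * real (card {x\<in>A. P x})"
  by (simp add: sum.inter_filter[symmetric])

lemma gcdb_sum_eq:
  "gcdb_sum b x = (\<Sum>d\<in>{1..nat \<lfloor>x\<rfloor>}. real (totient d) * real (nat \<lfloor>x\<rfloor> div d) * real (nat \<lfloor>x ^ b\<rfloor> div d ^ b))"
proof -
  define N where "N = nat \<lfloor>x\<rfloor>"
  define M where "M = nat \<lfloor>x ^ b\<rfloor>"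
  define f where "f = (\<lambda>r s d. if d dvd r \<and> d ^ b dvd s then real (totient d) else 0)"
  have "gcdb_sum b x = (\<Sum>r\<in>{1..N}. \<Sum>s\<in>{1..M}. \<Sum>d\<in>{1..N}. f r s d)"
    unfolding gcdb_sum_def N_def[symmetric] M_def[symmetric]
  proof (intro sum.cong refl)
    fix r s assume r: "r \<in> {1..N}"
    have "real (gcd_b b r s) = (\<Sum>d\<in>{1..r}. f r s d)" unfolding f_def using r by (intro gcdb_totient) auto
    also have "\<dots> = (\<Sum>d\<in>{1..N}. f r s d)"
    proof (rule sum.mono_neutral_left)
      show "\<forall>d\<in>{1..N} - {1..r}. f r s d = 0" using r by (auto simp: f_def dest: dvd_imp_le)
    qed (use r in auto)
    finally show "real (gcd_b b r s) = (\<Sum>d\<in>{1..N}. f r s d)" .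
  qed
  also have "\<dots> = (\<Sum>d\<in>{1..N}. \<Sum>r\<in>{1..N}. \<Sum>s\<in>{1..M}. f r s d)"
  proof -
    have "(\<Sum>r\<in>{1..N}. \<Sum>s\<in>{1..M}. \<Sum>d\<in>{1..N}. f r s d) = (\<Sum>r\<in>{1..N}. \<Sum>d\<in>{1..N}. \<Sum>s\<in>{1..M}. f r s d)"
      by (rule sum.cong[OF refl], rule sum.swap)
    also have "\<dots> = (\<Sum>d\<in>{1..N}. \<Sum>r\<in>{1..N}. \<Sum>s\<in>{1..M}. f r s d)" by (rule sum.swap)
    finally show ?thesis .
  qed
  also have "\<dots> = (\<Sum>d\<in>{1..N}. real (totient d) * real (N div d) * real (M div d ^ b))"
  proof (intro sum.cong refl)
    fix d assume d: "d \<in> {1..N}"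
    have "(\<Sum>r\<in>{1..N}. \<Sum>s\<in>{1..M}. f r s d) = (\<Sum>r\<in>{1..N}. if d dvd r then real (totient d) * real (card {s\<in>{1..M}. d ^ b dvd s}) else 0)"
      unfolding f_def by (intro sum.cong refl) (simp add: sum_if_const)
    also have "\<dots> = real (totient d) * real (card {s\<in>{1..M}. d ^ b dvd s}) * real (card {r\<in>{1..N}. d dvd r})"
      by (rule sum_if_const) simp
    also have "\<dots> = real (totient d) * real (N div d) * real (M div d ^ b)"
    proof -
      have c1: "card {r\<in>{1..N}. d dvd r} = N div d" using d by (intro card_multiples) auto
      have c2: "card {s\<in>{1..M}. d ^ b dvd s} = M div d ^ b" using d by (intro card_multiples) auto
      show ?thesis unfolding c1 c2 by (simp add: mult_ac)
    qed
    finally show "(\<Sum>r\<in>{1..N}. \<Sum>s\<in>{1..M}. f r s d) = real (totient d) * real (N div d) * real (M div d ^ b)" .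
  qed
  finally show ?thesis unfolding N_def M_def .
qed

lemma div_bounds:
  assumes "x \<ge> 1" "(D::nat) > 0"
  shows "real (nat \<lfloor>x\<rfloor> div D) \<le> x / D" "x / D - 2 \<le> real (nat \<lfloor>x\<rfloor> div D)"
proof -
  define N where "N = nat \<lfloor>x\<rfloor>"
  define q where "q = N div D"
  have N1: "real N \<le> x" "x < real N + 1" unfolding N_def using assms(1) by linarith+
  have "q * D \<le> N" unfolding q_def by simp
  then have "real q * real D \<le> real N" by (metis of_nat_mono of_nat_mult)
  then have "real q * real D \<le> x" using N1 by linarith
  then show "real (nat \<lfloor>x\<rfloor> div D) \<le> x / D" using assms(2) unfolding q_def N_def[symmetric]
    by (simp add: field_simps)
  have "N < D + q * D" unfolding q_def using assms(2) by (rule dividend_less_div_times)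
  then have "real N + 1 \<le> real D + real q * real D" by (metis of_nat_add of_nat_mult of_nat_Suc Suc_leI of_nat_mono add.commute)
  then have "x \<le> real D + real q * real D" using N1 by linarith
  then have "x \<le> 2 * real D + real q * real D" using assms(2) by simp
  then show "x / D - 2 \<le> real (nat \<lfloor>x\<rfloor> div D)" using assms(2) unfolding q_def N_def[symmetric]
    by (simp add: field_simps)
qed

lemma prod_err:
  fixes u v X Y :: real
  assumes "0 \<le> u" "u \<le> X" "X - 2 \<le> u" "0 \<le> v" "v \<le> Y" "Y - 2 \<le> v"
  shows "\<bar>u * v - X * Y\<bar> \<le> 2 * X + 2 * Y"
proof -
  have e: "X * Y - u * v = X * (Y - v) + v * (X - u)" by (simp add: algebra_simps)
  have 1: "0 \<le> X * (Y - v)" "X * (Y - v) \<le> X * 2" using assms by (auto intro: mult_left_mono)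
  have 2: "0 \<le> v * (X - u)" "v * (X - u) \<le> Y * 2" using assms
    by (auto intro!: mult_mono)
  show ?thesis using e 1 2 by linarith
qed

lemma telescope_bound:
  assumes "N \<ge> 1" "N \<le> K"
  shows "(\<Sum>d\<in>{Suc N..K}. 1 / (real d * (real d - 1))) = 1 / real N - 1 / real K"
  using assms(2)
proof (induction K rule: dec_induct)
  case base then show ?case by simp
next
  case (step K)
  have K: "real K \<ge> 1" using step assms by simp
  have K2: "real K + real K * real K \<noteq> 0"
  proof -
    have "real K * real K \<ge> 0" by simp
    then show ?thesis using K by linarith
  qed
  have "(\<Sum>d\<in>{Suc N..Suc K}. 1 / (real d * (real d - 1))) = 1 / real N - 1 / real K + 1 / ((real K + 1) * real K)"
    using step K2 by simp
  also have "\<dots> = 1 / real N - 1 / real (Suc K)"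
  proof -
    have "1 / real K - 1 / ((real K + 1) * real K) = 1 / (real K + 1)" using K K2 by (simp add: field_simps)
    then show ?thesis by (simp add: add.commute)
  qed
  finally show ?case .
qed

lemma recip_pow_le:
  assumes "b \<ge> 2" "real N \<ge> 1" "real d \<ge> real N + 1"
  shows "1 / real d ^ b \<le> 1 / real N ^ (b - 2) * (1 / (real d * (real d - 1)))"
proof -
  have "real N ^ (b-2) * (real d * (real d - 1)) \<le> real d ^ (b-2) * (real d * real d)"
    using assms by (intro mult_mono power_mono) auto
  also have "\<dots> = real d ^ (b - 2 + 2)" by (simp only: power_add power2_eq_square)
  also have "\<dots> = real d ^ b" using assms(1) by (metis le_add_diff_inverse2)
  finally have "real N ^ (b-2) * (real d * (real d - 1)) \<le> real d ^ b" .
  moreover have "real N ^ (b-2) * (real d * (real d - 1)) > 0" using assms by auto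
  ultimately have "1 / real d ^ b \<le> 1 / (real N ^ (b-2) * (real d * (real d - 1)))"
    using assms by (intro divide_left_mono) (auto intro!: mult_pos_pos)
  then show ?thesis by simp
qed


lemma a_le: "d \<ge> 1 \<Longrightarrow> real (totient d) / real d ^ (b+1) \<le> 1 / real d ^ b"
proof -
  assume d: "d \<ge> 1"
  have "real (totient d) \<le> real d" by (simp add: totient_le)
  then have "real (totient d) / real d ^ (b+1) \<le> real d / real d ^ (b+1)"
    by (intro divide_right_mono) auto
  also have "\<dots> = 1 / real d ^ b" using d by (simp add: field_simps)
  finally show ?thesis .
qed

lemma tail_bound:
  assumes b: "b \<ge> 2" and N: "N \<ge> 1"
  shows "0 \<le> zeta (real b) / zeta (real (b+1)) - (\<Sum>d\<in>{1..N}. real (totient d) / real d ^ (b+1))"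
    and "zeta (real b) / zeta (real (b+1)) - (\<Sum>d\<in>{1..N}. real (totient d) / real d ^ (b+1)) \<le> 1 / real N ^ (b - 1)"
proof -
  define a where "a = (\<lambda>d::nat. real (totient d) / real d ^ (b+1))"
  define C where "C = zeta (real b) / zeta (real (b+1))"
  have ha: "(a has_sum C) {1..}" unfolding a_def C_def using identity_C[OF b] .
  have st: "a summable_on {Suc N..}"
  proof (rule summable_on_subset_banach)
    show "a summable_on {1..}" using ha unfolding summable_on_def by blast
    show "{Suc N..} \<subseteq> {1..}" by auto
  qed
  define T where "T = infsum a {Suc N..}"
  have h2: "(a has_sum T) {Suc N..}" using st unfolding T_def by simp
  have h1: "(a has_sum (\<Sum>d\<in>{1..N}. a d)) {1..N}" by (intro has_sum_finiteI) auto
  have "(a has_sum (\<Sum>d\<in>{1..N}. a d) + T) ({1..N} \<union> {Suc N..})"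
    by (rule has_sum_Un_disjoint[OF h1 h2]) auto
  also have "{1..N} \<union> {Suc N..} = {1..}" using N by auto
  finally have X: "(a has_sum (\<Sum>d\<in>{1..N}. a d) + T) {1..}" .
  have "C = (\<Sum>d\<in>{1..N}. a d) + T" using has_sum_unique[OF ha X] .
  then have CT: "C - (\<Sum>d\<in>{1..N}. a d) = T" by simp
  have "T \<ge> 0" by (rule has_sum_nonneg[OF h2]) (simp add: a_def)
  then show "0 \<le> zeta (real b) / zeta (real (b+1)) - (\<Sum>d\<in>{1..N}. real (totient d) / real d ^ (b+1))"
    using CT unfolding a_def C_def by simp
  have "T \<le> 1 / real N ^ (b - 2) * (1 / real N)"
    unfolding T_def
  proof (rule infsum_le_finite_sums[OF st])
    fix F assume F: "finite F" "F \<subseteq> {Suc N..}"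
    define K where "K = Max (insert N F)"
    have K: "N \<le> K" "F \<subseteq> {Suc N..K}" using F unfolding K_def by auto
    have "sum a F \<le> (\<Sum>d\<in>F. 1 / real N ^ (b - 2) * (1 / (real d * (real d - 1))))"
    proof (rule sum_mono)
      fix d assume "d \<in> F"
      then have d: "d \<ge> Suc N" using F by auto
      have "a d \<le> 1 / real d ^ b" unfolding a_def using d by (intro a_le) auto
      also have "\<dots> \<le> 1 / real N ^ (b - 2) * (1 / (real d * (real d - 1)))"
        using d N b by (intro recip_pow_le) auto
      finally show "a d \<le> 1 / real N ^ (b - 2) * (1 / (real d * (real d - 1)))" .
    qed
    also have "\<dots> \<le> (\<Sum>d\<in>{Suc N..K}. 1 / real N ^ (b - 2) * (1 / (real d * (real d - 1))))"
    proof (rule sum_mono2)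
      show "\<And>d. d \<in> {Suc N..K} - F \<Longrightarrow> 0 \<le> 1 / real N ^ (b - 2) * (1 / (real d * (real d - 1)))"
        by auto
    qed (use K in auto)
    also have "\<dots> = 1 / real N ^ (b - 2) * (1 / real N - 1 / real K)"
      unfolding sum_distrib_left[symmetric] telescope_bound[OF N K(1)] ..
    also have "\<dots> \<le> 1 / real N ^ (b - 2) * (1 / real N)"
      by (intro mult_left_mono) auto
    finally show "sum a F \<le> 1 / real N ^ (b - 2) * (1 / real N)" .
  qed
  also have "\<dots> = 1 / real N ^ (b - 1)"
  proof -
    have "real N ^ (b - 1) = real N ^ (b - 2) * real N"
    proof -
      have "b - 1 = Suc (b - 2)" using b by simp
      then show ?thesis by (simp only: power_Suc2)
    qed
    then show ?thesis by simp
  qed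
  finally show "zeta (real b) / zeta (real (b+1)) - (\<Sum>d\<in>{1..N}. real (totient d) / real d ^ (b+1)) \<le> 1 / real N ^ (b - 1)"
    using CT unfolding a_def C_def by simp
qed

lemma harm_bound:
  assumes b: "b \<ge> 2" and N: "N \<ge> 1"
  shows "(\<Sum>d\<in>{1..N}. 1 / real d ^ (b - 1)) \<le> 1 + ln (real N)"
proof -
  have "(\<Sum>d\<in>{1..N}. 1 / real d ^ (b - 1)) \<le> (\<Sum>d\<in>{1..N}. 1 / real d)"
  proof (rule sum_mono)
    fix d assume d: "d \<in> {1..N}"
    have "real d ^ 1 \<le> real d ^ (b - 1)" using d b by (intro power_increasing) auto
    then show "1 / real d ^ (b - 1) \<le> 1 / real d" using d by (intro divide_left_mono) auto
  qed
  also have "\<dots> = harm N" unfolding harm_def by (simp add: inverse_eq_divide)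
  also have "\<dots> \<le> 1 + ln (real N)"
    using euler_mascheroni_sequence_decreasing[of 1 N] N by (simp add: harm_def)
  finally show ?thesis .
qed

lemma sq_bound:
  assumes b: "b \<ge> 3" and N: "N \<ge> 1"
  shows "(\<Sum>d\<in>{1..N}. 1 / real d ^ (b - 1)) \<le> 2"
proof -
  have e1: "(\<Sum>d\<in>{1..N}. 1 / real d ^ (b - 1)) = 1 + (\<Sum>d\<in>{Suc 1..N}. 1 / real d ^ (b - 1))"
    using N by (simp add: sum.atLeast_Suc_atMost)
  have e2: "(\<Sum>d\<in>{Suc 1..N}. 1 / real d ^ (b - 1)) \<le> (\<Sum>d\<in>{Suc 1..N}. 1 / (real d * (real d - 1)))"
  proof (rule sum_mono)
    fix d assume d: "d \<in> {Suc 1..N}"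
    have "real d ^ 2 \<le> real d ^ (b - 1)" using d b by (intro power_increasing) auto
    then have "1 / real d ^ (b - 1) \<le> 1 / real d ^ 2" using d by (intro divide_left_mono) auto
    also have "\<dots> \<le> 1 / real 1 ^ (2 - 2) * (1 / (real d * (real d - 1)))"
      using d by (intro recip_pow_le) auto
    finally show "1 / real d ^ (b - 1) \<le> 1 / (real d * (real d - 1))" by simp
  qed
  have e3: "(\<Sum>d\<in>{Suc 1..N}. 1 / (real d * (real d - 1))) = 1 - 1 / real N"
    using telescope_bound[of 1 N] N by simp
  have "1 / real N \<ge> 0" by simp
  then show ?thesis using e1 e2 e3 by linarith
qed

lemma term_err:
  assumes x: "x \<ge> 1" and b: "b \<ge> 1" and d: "d \<ge> 1"
  shows "\<bar>real (totient d) * real (nat \<lfloor>x\<rfloor> div d) * real (nat \<lfloor>x ^ b\<rfloor> div d ^ b)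
          - x ^ (b+1) * (real (totient d) / real d ^ (b+1))\<bar> \<le> 2 * x + 2 * x ^ b / real d ^ (b - 1)"
proof -
  define u where "u = real (nat \<lfloor>x\<rfloor> div d)"
  define v where "v = real (nat \<lfloor>x ^ b\<rfloor> div d ^ b)"
  define X where "X = x / real d"
  define Y where "Y = x ^ b / real d ^ b"
  have dpos: "real d > 0" using d by simp
  have xb: "x ^ b \<ge> 1" using x by (rule one_le_power)
  have ub: "u \<le> X" "X - 2 \<le> u" unfolding u_def X_def using div_bounds[OF x, of d] d by auto
  have vb: "v \<le> Y" "Y - 2 \<le> v" unfolding v_def Y_def using div_bounds[OF xb, of "d ^ b"] d by auto
  have XY: "x ^ (b+1) / real d ^ (b+1) = X * Y" unfolding X_def Y_def by (simp add: field_simps)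
  have "\<bar>real (totient d) * u * v - x ^ (b+1) * (real (totient d) / real d ^ (b+1))\<bar>
        = real (totient d) * \<bar>u * v - X * Y\<bar>"
  proof -
    have "x ^ (b+1) * (real (totient d) / real d ^ (b+1)) = real (totient d) * (X * Y)"
      unfolding XY[symmetric] by simp
    then have "real (totient d) * u * v - x ^ (b+1) * (real (totient d) / real d ^ (b+1))
               = real (totient d) * (u * v - X * Y)" by (simp add: algebra_simps)
    then show ?thesis by (simp add: abs_mult)
  qed
  also have "\<dots> \<le> real d * (2 * X + 2 * Y)"
  proof (rule mult_mono)
    show "real (totient d) \<le> real d" by (simp add: totient_le)
    show "\<bar>u * v - X * Y\<bar> \<le> 2 * X + 2 * Y" by (rule prod_err) (use ub vb in \<open>auto simp: u_def v_def\<close>)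
  qed auto
  also have "\<dots> = 2 * x + 2 * x ^ b / real d ^ (b - 1)"
  proof -
    have "real d ^ b = real d * real d ^ (b - 1)" using b by (metis power_eq_if not_one_le_zero)
    then show ?thesis unfolding X_def Y_def using dpos by (simp add: field_simps)
  qed
  finally show ?thesis unfolding u_def v_def .
qed

lemma finite_err:
  assumes x: "x \<ge> 1" and b: "b \<ge> 1"
  shows "\<bar>gcdb_sum b x - x ^ (b+1) * (\<Sum>d\<in>{1..nat \<lfloor>x\<rfloor>}. real (totient d) / real d ^ (b+1))\<bar>
         \<le> 2 * x * real (nat \<lfloor>x\<rfloor>) + 2 * x ^ b * (\<Sum>d\<in>{1..nat \<lfloor>x\<rfloor>}. 1 / real d ^ (b - 1))"
proof -
  define N where "N = nat \<lfloor>x\<rfloor>"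
  have eq: "gcdb_sum b x - x ^ (b+1) * (\<Sum>d\<in>{1..N}. real (totient d) / real d ^ (b+1))
       = (\<Sum>d\<in>{1..N}. real (totient d) * real (N div d) * real (nat \<lfloor>x ^ b\<rfloor> div d ^ b)
          - x ^ (b+1) * (real (totient d) / real d ^ (b+1)))"
    unfolding gcdb_sum_eq N_def[symmetric] sum_distrib_left sum_subtractf[symmetric] ..
  have "\<bar>gcdb_sum b x - x ^ (b+1) * (\<Sum>d\<in>{1..N}. real (totient d) / real d ^ (b+1))\<bar> \<le> (\<Sum>d\<in>{1..N}. \<bar>real (totient d) * real (N div d) * real (nat \<lfloor>x ^ b\<rfloor> div d ^ b)
          - x ^ (b+1) * (real (totient d) / real d ^ (b+1))\<bar>)" unfolding eq by (rule sum_abs)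
  also have "\<dots> \<le> (\<Sum>d\<in>{1..N}. 2 * x + 2 * x ^ b / real d ^ (b - 1))"
    apply (rule sum_mono)
    unfolding N_def
    apply (rule term_err[OF x b])
    apply simp
    done
  also have "\<dots> = (\<Sum>d\<in>{1..N}. 2 * x) + (\<Sum>d\<in>{1..N}. 2 * x ^ b * (1 / real d ^ (b - 1)))"
    unfolding sum.distrib[symmetric] by (intro sum.cong refl) simp
  also have "\<dots> = 2 * x * real N + 2 * x ^ b * (\<Sum>d\<in>{1..N}. 1 / real d ^ (b - 1))"
    unfolding sum_distrib_left[symmetric] by simp
  finally show ?thesis unfolding N_def .
qed

lemma tail_scale:
  assumes x: "x \<ge> 1" and N: "real N \<ge> x / 2" and b: "b \<ge> 1"
  shows "x ^ (b+1) * (1 / real N ^ (b - 1)) \<le> 2 ^ (b - 1) * x ^ 2"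
proof -
  have hpos: "(x / 2) ^ (b - 1) > 0" using x by simp
  have "(x / 2) ^ (b - 1) \<le> real N ^ (b - 1)" using N x by (intro power_mono) auto
  moreover have Npos: "real N ^ (b - 1) > 0" using N x by simp
  ultimately have "1 / real N ^ (b - 1) \<le> 1 / (x / 2) ^ (b - 1)" using hpos by (intro divide_left_mono) (auto intro: mult_pos_pos)
  then have "x ^ (b+1) * (1 / real N ^ (b - 1)) \<le> x ^ (b+1) * (1 / (x / 2) ^ (b - 1))"
    by (intro mult_left_mono) (use x in auto)
  also have "\<dots> = 2 ^ (b - 1) * x ^ 2"
  proof -
    have bb: "b + 1 = (b - 1) + 2" using b by simp
    have p1: "x ^ (b+1) = x ^ (b - 1) * x ^ 2" unfolding bb power_add ..
    have p2: "(x / 2) ^ (b - 1) = x ^ (b - 1) / 2 ^ (b - 1)" by (rule power_divide)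
    have p3: "x ^ (b - 1) > 0" using x by simp
    have aux: "\<And>y z w::real. y > 0 \<Longrightarrow> w > 0 \<Longrightarrow> y * z * (1 / (y / w)) = w * z"
      by (simp add: field_simps)
    show ?thesis unfolding p1 p2 by (rule aux[OF p3]) simp
  qed
  finally show ?thesis .
qed

theorem mainTheorem3:
  fixes b :: nat
  assumes "b \<ge> 2"
  shows "(\<lambda>x. gcdb_sum b x - x ^ (b + 1) * zeta (real b) / zeta (real (b + 1)))
           \<in> O[at_top](err_E b)"
proof -
  define K :: real where "K = (if b = 2 then 8 else 6 + 2 ^ (b - 1))"
  show ?thesis
  proof (rule bigoI[where c = K])
    show "\<forall>\<^sub>F x in at_top. norm (gcdb_sum b x - x ^ (b + 1) * zeta (real b) / zeta (real (b + 1)))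
            \<le> K * norm (err_E b x)"
      using eventually_ge_at_top[of "3::real"]
    proof eventually_elim
      case (elim x)
      define N where "N = nat \<lfloor>x\<rfloor>"
      define C where "C = zeta (real b) / zeta (real (b+1))"
      define S where "S = (\<Sum>d\<in>{1..N}. real (totient d) / real d ^ (b+1))"
      define H where "H = (\<Sum>d\<in>{1..N}. 1 / real d ^ (b - 1))"
      have x1: "x \<ge> 1" using elim by simp
      have Nx: "real N \<le> x" "x < real N + 1" unfolding N_def using x1 by linarith+
      have N1: "N \<ge> 1" using Nx elim by linarith
      have N2: "real N \<ge> x / 2" using Nx elim by linarith
      have fe: "\<bar>gcdb_sum b x - x ^ (b+1) * S\<bar> \<le> 2 * x * real N + 2 * x ^ b * H"
        unfolding S_def H_def N_def using finite_err[OF x1, of b] assms by simp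
      have t1: "0 \<le> C - S" and t2: "C - S \<le> 1 / real N ^ (b - 1)"
        unfolding C_def S_def using tail_bound[OF assms N1] by auto
      have ts: "x ^ (b+1) * (1 / real N ^ (b - 1)) \<le> 2 ^ (b - 1) * x ^ 2"
        using tail_scale[OF x1 N2] assms by simp
      have t3: "x ^ (b+1) * (C - S) \<le> 2 ^ (b - 1) * x ^ 2"
        using mult_left_mono[OF t2, of "x ^ (b+1)"] x1 ts by simp
      have t4: "x ^ (b+1) * (C - S) \<ge> 0" using t1 x1 by simp
      have xN: "2 * x * real N \<le> 2 * x ^ 2" using Nx x1 by (simp add: power2_eq_square)
      have eq: "gcdb_sum b x - x ^ (b + 1) * zeta (real b) / zeta (real (b + 1))
                = (gcdb_sum b x - x ^ (b+1) * S) - x ^ (b+1) * (C - S)"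
        unfolding C_def by (simp add: algebra_simps)
      have main: "\<bar>gcdb_sum b x - x ^ (b + 1) * zeta (real b) / zeta (real (b + 1))\<bar>
                  \<le> 2 * x ^ 2 + 2 * x ^ b * H + 2 ^ (b - 1) * x ^ 2"
        unfolding eq using fe t3 t4 xN by linarith
      show ?case
      proof (cases "b = 2")
        case True
        have lnx: "ln x \<ge> 1"
        proof -
          have "exp 1 \<le> x" using exp_le elim by linarith
          then show ?thesis using ln_ge_iff[of x 1] x1 by simp
        qed
        have H: "H \<le> 1 + ln x"
        proof -
          have "H \<le> 1 + ln (real N)" unfolding H_def using harm_bound[OF assms N1] .
          moreover have "ln (real N) \<le> ln x" using Nx N1 by (intro ln_mono) auto
          ultimately show ?thesis by linarith
        qed
        have x2: "x ^ 2 \<le> x ^ 2 * ln x" using lnx by (simp add: mult_le_cancel_left1)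
        have "2 * x ^ 2 * H \<le> 2 * x ^ 2 * (1 + ln x)" using H by (intro mult_left_mono) auto
        then have "\<bar>gcdb_sum b x - x ^ (b + 1) * zeta (real b) / zeta (real (b + 1))\<bar> \<le> 8 * (x ^ 2 * ln x)"
          using main True x2 by (simp add: algebra_simps)
        moreover have "norm (err_E b x) = x ^ 2 * ln x" using True lnx unfolding err_E_def by simp
        ultimately show ?thesis unfolding K_def using True by simp
      next
        case False
        then have b3: "b \<ge> 3" using assms by simp
        have H: "H \<le> 2" unfolding H_def using sq_bound[OF b3 N1] .
        have xb: "x ^ 2 \<le> x ^ b" using assms x1 by (intro power_increasing) auto
        have "2 * x ^ b * H \<le> 2 * x ^ b * 2" using H x1 by (intro mult_left_mono) auto
        moreover have "2 ^ (b - 1) * x ^ 2 \<le> 2 ^ (b - 1) * x ^ b" using xb by (intro mult_left_mono) auto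
        ultimately have "\<bar>gcdb_sum b x - x ^ (b + 1) * zeta (real b) / zeta (real (b + 1))\<bar> \<le> 6 * x ^ b + 2 ^ (b - 1) * x ^ b"
          using main xb by linarith
        then have "\<bar>gcdb_sum b x - x ^ (b + 1) * zeta (real b) / zeta (real (b + 1))\<bar> \<le> (6 + 2 ^ (b - 1)) * x ^ b"
          by (simp add: distrib_right)
        moreover have "norm (err_E b x) = x ^ b" using False x1 unfolding err_E_def by simp
        ultimately show ?thesis unfolding K_def using False by simp
      qed
    qed
  qed
qed

end
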